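(* Let $G$ be a finite simple connected graph whose block tree has more than one vertex, let $B$ be an end block of $G$, and let $u$ be the unique cut vertex of $G$ contained in $B$. Assume every vertex of $B$ other than $u$ is adjacent to $u$. Let $H$ be the graph obtained from $G$ by contracting $B$ into the vertex $u$ (equivalently, deleting $V(B)\setminus\{u\}$). Then $c_{\infty}(H)\ge c_{\infty}(G)$.
   Context: Cops and Robber with an infinitely fast robber: the game is played on a graph $G$. A set of cops first choose initial vertices (several cops may share a vertex); then the robber, knowing their positions, chooses a vertex. Then the players move in alternating rounds, cops first. In the cops' turn each cop either stays or moves to an adjacent vertex; in the robber's turn she either stays or moves along any path of $G$ starting at her current vertex that contains no vertex currently occupied by a cop. The cops win if at some point a cop moves to the vertex occupied by the robber. $c_{\infty}(G)$ is the minimum number of cops for which the cops have a strategy that guarantees a win. A block of $G$ is either a maximal 2-connected subgraph or an edge not contained in any 2-connected subgraph. The block tree $B(G)$ is the bipartite tree whose vertices are the blocks and cut vertices of $G$, a block adjacent to a cut vertex iff it contains it. End blocks are blocks that are leaves of $B(G)$. *)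

theory Defs
  imports Main
begin

definition simple_graph :: "'a set \<Rightarrow> ('a \<Rightarrow> 'a \<Rightarrow> bool) \<Rightarrow> bool" where
  "simple_graph V E \<longleftrightarrow> finite V \<and> (\<forall>x y. E x y \<longrightarrow> x \<in> V \<and> y \<in> V)
     \<and> (\<forall>x y. E x y \<longrightarrow> E y x) \<and> (\<forall>x. \<not> E x x)"

definition reach_in :: "('a \<Rightarrow> 'a \<Rightarrow> bool) \<Rightarrow> 'a set \<Rightarrow> 'a \<Rightarrow> 'a \<Rightarrow> bool" where
  "reach_in E S x y \<longleftrightarrow> x \<in> S \<and> (\<lambda>a b. E a b \<and> a \<in> S \<and> b \<in> S)\<^sup>*\<^sup>* x y"

definition connected_in :: "('a \<Rightarrow> 'a \<Rightarrow> bool) \<Rightarrow> 'a set \<Rightarrow> bool" where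
  "connected_in E S \<longleftrightarrow> (\<forall>x\<in>S. \<forall>y\<in>S. reach_in E S x y)"

definition cut_vertex :: "'a set \<Rightarrow> ('a \<Rightarrow> 'a \<Rightarrow> bool) \<Rightarrow> 'a \<Rightarrow> bool" where
  "cut_vertex V E v \<longleftrightarrow> v \<in> V \<and> \<not> connected_in E (V - {v})"

text \<open>Nonseparable vertex set: at least two vertices, connected, and no vertex
  separates it (i.e. a 2-connected induced subgraph or a single edge).\<close>
definition nonsep :: "('a \<Rightarrow> 'a \<Rightarrow> bool) \<Rightarrow> 'a set \<Rightarrow> bool" where
  "nonsep E S \<longleftrightarrow> 2 \<le> card S \<and> finite S \<and> connected_in E S
     \<and> (\<forall>x\<in>S. connected_in E (S - {x}))"

definition is_block :: "'a set \<Rightarrow> ('a \<Rightarrow> 'a \<Rightarrow> bool) \<Rightarrow> 'a set \<Rightarrow> bool" where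
  "is_block V E B \<longleftrightarrow> B \<subseteq> V \<and> nonsep E B \<and> (\<forall>S. B \<subset> S \<and> S \<subseteq> V \<longrightarrow> \<not> nonsep E S)"

definition block_tree_vertices :: "'a set \<Rightarrow> ('a \<Rightarrow> 'a \<Rightarrow> bool) \<Rightarrow> ('a set + 'a) set" where
  "block_tree_vertices V E = Inl ` {B. is_block V E B} \<union> Inr ` {v. cut_vertex V E v}"

text \<open>End block: a block that is a leaf of B(G), i.e. contains exactly one cut vertex.\<close>
definition end_block :: "'a set \<Rightarrow> ('a \<Rightarrow> 'a \<Rightarrow> bool) \<Rightarrow> 'a set \<Rightarrow> bool" where
  "end_block V E B \<longleftrightarrow> is_block V E B \<and> card {v\<in>B. cut_vertex V E v} = 1"

text \<open>Cops and robber with an infinitely fast robber.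
  A position is (cop positions as a list, robber vertex), cops to move,
  robber not on a cop.  cops_win_from cs r: cops can force capture in finitely many rounds
  (least fixed point = attractor of the reachability game).\<close>
inductive cops_win_from :: "'a set \<Rightarrow> ('a \<Rightarrow> 'a \<Rightarrow> bool) \<Rightarrow> 'a list \<Rightarrow> 'a \<Rightarrow> bool"
  for V E where
  step: "list_all2 (\<lambda>c c'. c' = c \<or> E c c') cs cs' \<Longrightarrow>
         (r \<in> set cs' \<or> (\<forall>r'. reach_in E (V - set cs') r r' \<longrightarrow> cops_win_from V E cs' r'))
         \<Longrightarrow> cops_win_from V E cs r"

definition cops_win :: "'a set \<Rightarrow> ('a \<Rightarrow> 'a \<Rightarrow> bool) \<Rightarrow> nat \<Rightarrow> bool" where
  "cops_win V E k \<longleftrightarrow> (\<exists>cs. length cs = k \<and> set cs \<subseteq> V \<and>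
      (\<forall>r\<in>V - set cs. cops_win_from V E cs r))"

definition c_inf :: "'a set \<Rightarrow> ('a \<Rightarrow> 'a \<Rightarrow> bool) \<Rightarrow> nat" where
  "c_inf V E = (LEAST k. cops_win V E k)"

end

theory Submission
  imports Defs
begin

lemma reach_induct[consumes 1, case_names base step]:
  assumes "reach_in E S x y" and "x \<in> S \<Longrightarrow> P x"
    and "\<And>y z. reach_in E S x y \<Longrightarrow> E y z \<Longrightarrow> z \<in> S \<Longrightarrow> P y \<Longrightarrow> P z"
  shows "P y"
proof -
  have x: "x \<in> S" and r: "(\<lambda>a b. E a b \<and> a \<in> S \<and> b \<in> S)\<^sup>*\<^sup>* x y"
    using assms(1) unfolding reach_in_def by auto
  from r show ?thesis
  proof (induction rule: rtranclp_induct)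
    case base then show ?case using assms(2) x by simp
  next
    case (step y z)
    then show ?case using assms(3)[of y z] x unfolding reach_in_def by auto
  qed
qed

lemma reach_refl: "x \<in> S \<Longrightarrow> reach_in E S x x"
  by (simp add: reach_in_def)

lemma reach_mem: "reach_in E S x y \<Longrightarrow> y \<in> S"
  by (induction rule: reach_induct) auto

lemma reach_snoc: assumes "reach_in E S x y" "E y z" "z \<in> S" shows "reach_in E S x z"
proof -
  have "y \<in> S" using reach_mem[OF assms(1)] .
  thus ?thesis using assms unfolding reach_in_def by (auto intro: rtranclp.rtrancl_into_rtrancl)
qed

lemma reach_trans: "reach_in E S y z \<Longrightarrow> reach_in E S x y \<Longrightarrow> reach_in E S x z"
  by (induction rule: reach_induct) (auto intro: reach_snoc)

lemma reach_trans': "reach_in E S x y \<Longrightarrow> reach_in E S y z \<Longrightarrow> reach_in E S x z"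
  by (rule reach_trans)

lemma reach_mono: "reach_in E S x y \<Longrightarrow> S \<subseteq> S' \<Longrightarrow> reach_in E S' x y"
  by (induction rule: reach_induct) (auto intro: reach_snoc reach_refl)

lemma reach_edge: "E x y \<Longrightarrow> x \<in> S \<Longrightarrow> y \<in> S \<Longrightarrow> reach_in E S x y"
  by (rule reach_snoc[OF reach_refl])

lemma reach_sym: assumes "\<And>a b. E a b \<Longrightarrow> E b a" "reach_in E S x y" shows "reach_in E S y x"
  using assms(2)
proof (induction rule: reach_induct)
  case base thus ?case by (rule reach_refl)
next
  case (step y z)
  have "y \<in> S" using reach_mem[OF step(1)] .
  have "reach_in E S z y" using reach_edge[of E z y S] assms(1)[OF step(2)] step(3) \<open>y\<in>S\<close> by blast
  thus ?case using step(4) by (rule reach_trans')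
qed

lemma reach_proj:
  assumes "reach_in E S a b" "\<And>x. x \<in> S \<Longrightarrow> p x \<in> T"
   "\<And>x y. x \<in> S \<Longrightarrow> y \<in> S \<Longrightarrow> E x y \<Longrightarrow> p x = p y \<or> E' (p x) (p y)"
  shows "reach_in E' T (p a) (p b)"
  using assms(1)
proof (induction rule: reach_induct)
  case base thus ?case using assms(2) by (simp add: reach_refl)
next
  case (step y z)
  have "y \<in> S" using reach_mem[OF step(1)] .
  from assms(3)[OF this step(3) step(2)] show ?case
    using step(4) assms(2)[OF step(3)] by (auto intro: reach_snoc)
qed

lemma reach_within: "reach_in E S a z \<Longrightarrow> reach_in E {y. reach_in E S a y} a z"
proof (induction rule: reach_induct)
  case base thus ?case by (auto intro: reach_refl)
next
  case (step y z)
  thus ?case by (auto intro: reach_snoc)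
qed

lemma conn_hub: assumes "\<And>a b. E a b \<Longrightarrow> E b a" "\<And>y. y \<in> S \<Longrightarrow> reach_in E S y h"
  shows "connected_in E S"
  unfolding connected_in_def
proof (intro ballI)
  fix x y assume "x \<in> S" "y \<in> S"
  have "reach_in E S h y" using reach_sym[OF assms(1) assms(2)[OF \<open>y\<in>S\<close>]] .
  thus "reach_in E S x y" using assms(2)[OF \<open>x\<in>S\<close>] by (rule reach_trans)
qed

lemma conn_reach: "connected_in E S \<Longrightarrow> x \<in> S \<Longrightarrow> y \<in> S \<Longrightarrow> S \<subseteq> T \<Longrightarrow> reach_in E T x y"
  unfolding connected_in_def by (meson reach_mono)

lemma first_entry:
  assumes "reach_in E S a c" "a \<notin> B" "c \<in> B"
  shows "\<exists>t c'. reach_in E (S - B) a t \<and> c' \<in> B \<and> c' \<in> S \<and> E t c'"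
proof -
  from assms(1) have "(c \<notin> B \<and> reach_in E (S-B) a c) \<or> (\<exists>t c'. reach_in E (S - B) a t \<and> c' \<in> B \<and> c' \<in> S \<and> E t c')"
  proof (induction rule: reach_induct)
    case base thus ?case using assms(2) by (auto intro: reach_refl)
  next
    case (step y z)
    show ?case
    proof (cases "z \<in> B")
      case True thus ?thesis using step by blast
    next
      case False thus ?thesis using step by (auto intro: reach_snoc)
    qed
  qed
  thus ?thesis using assms(3) by blast
qed


lemma block_closed:
  assumes sg: "simple_graph V E" and blk: "is_block V E B"
    and cut: "{v\<in>B. cut_vertex V E v} = {u}" and uB: "u \<in> B"
    and bB: "b \<in> B" and bu: "b \<noteq> u" and bw: "E b w"
  shows "w \<in> B"
proof (rule ccontr)
  assume wB: "w \<notin> B"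
  have sym: "\<And>x y. E x y \<Longrightarrow> E y x" using sg unfolding simple_graph_def by blast
  have inV: "\<And>x y. E x y \<Longrightarrow> x \<in> V \<and> y \<in> V" using sg unfolding simple_graph_def by blast
  have finV: "finite V" using sg unfolding simple_graph_def by blast
  have BV: "B \<subseteq> V" and nsB: "nonsep E B" and maxB: "\<And>S. B \<subset> S \<Longrightarrow> S \<subseteq> V \<Longrightarrow> \<not> nonsep E S"
    using blk unfolding is_block_def by auto
  have connB: "connected_in E B" and connBx: "\<And>x. x \<in> B \<Longrightarrow> connected_in E (B - {x})"
    and cardB: "2 \<le> card B"
    using nsB unfolding nonsep_def by auto
  have bV: "b \<in> V" using BV bB by auto
  have wV: "w \<in> V" using inV[OF bw] by auto
  have "\<not> cut_vertex V E b" using cut bB bu by blast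
  hence connb: "connected_in E (V - {b})" using bV unfolding cut_vertex_def by blast
  have "w \<in> V - {b}" "u \<in> V - {b}" using wV wB bB uB BV bu by auto
  hence "reach_in E (V - {b}) w u" using connb unfolding connected_in_def by blast
  then obtain t c where t: "reach_in E (V - {b} - B) w t" and c: "c \<in> B" "c \<in> V - {b}" "E t c"
    using first_entry[of E "V-{b}" w u B] wB uB by blast
  define F where "F = {P. P \<subseteq> V - B \<and> w \<in> P \<and> (\<exists>t\<in>P. \<exists>c\<in>B-{b}. E t c) \<and> (\<forall>z\<in>P. reach_in E P w z)}"
  define P0 where "P0 = {y. reach_in E (V - {b} - B) w y}"
  have "P0 \<in> F"
  proof -
    have "P0 \<subseteq> V - B" unfolding P0_def using reach_mem by fastforce
    moreover have "w \<in> P0" unfolding P0_def using \<open>w \<in> V - {b}\<close> wB by (auto intro: reach_refl)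
    moreover have "t \<in> P0" unfolding P0_def using t by simp
    moreover have "\<forall>z\<in>P0. reach_in E P0 w z" unfolding P0_def by (auto intro: reach_within)
    ultimately show ?thesis unfolding F_def using c by blast
  qed
  then obtain P where PF: "P \<in> F" and Pmin: "\<And>Q. Q \<in> F \<Longrightarrow> card P \<le> card Q"
    using ex_has_least_nat[of "\<lambda>P. P \<in> F" P0 card] by blast
  from PF have PVB: "P \<subseteq> V - B" and wP: "w \<in> P" and Preach: "\<And>z. z \<in> P \<Longrightarrow> reach_in E P w z"
    unfolding F_def by auto
  from PF obtain t0 c0 where t0: "t0 \<in> P" "c0 \<in> B - {b}" "E t0 c0" unfolding F_def by blast
  have finP: "finite P" using PVB finV finite_subset by blast
  have finB: "finite B" using BV finV finite_subset by blast
  have Preach': "reach_in E P z w" if "z \<in> P" for z using reach_sym[OF sym Preach[OF that]] .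
  define S where "S = B \<union> P"
  have SV: "S \<subseteq> V" using BV PVB S_def by auto
  have BS: "B \<subset> S" using wP wB S_def by auto
  have bS: "\<And>x. x \<noteq> b \<Longrightarrow> b \<in> S - {x}" using bB S_def by auto
  have key: "reach_in E (S - {x}) y b" if xP: "x \<in> P" and yP: "y \<in> P" "y \<noteq> x" for x y
  proof (rule ccontr)
    assume nr: "\<not> reach_in E (S - {x}) y b"
    define Q where "Q = {z. reach_in E (P - {x}) y z}"
    have QP: "Q \<subseteq> P - {x}" unfolding Q_def by (auto dest: reach_mem)
    have yQ: "y \<in> Q" using yP unfolding Q_def by (auto intro: reach_refl)
    have Qclosed: "\<And>z z'. z \<in> Q \<Longrightarrow> z' \<in> P - {x} \<Longrightarrow> E z z' \<Longrightarrow> z' \<in> Q"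
      unfolding Q_def by (auto intro: reach_snoc)
    have xB: "x \<notin> B" using xP PVB by auto
    have noB: False if "z \<in> Q" "c \<in> B" "E z c" for z c
    proof -
      have "reach_in E (P-{x}) y z" using \<open>z\<in>Q\<close> Q_def by simp
      hence r1: "reach_in E (S - {x}) y z" by (rule reach_mono) (auto simp: S_def)
      have r2: "reach_in E (S-{x}) z c" using reach_edge[of E z c "S - {x}"] that QP xB S_def by auto
      have r3: "reach_in E (S-{x}) c b" by (rule conn_reach[OF connB that(2) bB]) (use xB in \<open>auto simp: S_def\<close>)
      have "reach_in E (S-{x}) y b" using reach_trans[OF r3 reach_trans[OF r2 r1]] .
      thus False using nr by simp
    qed
    have wQ: "w \<notin> Q" using noB[of w b] sym[OF bw] bB by blast
    have t0Q: "t0 \<notin> Q" using noB[of t0 c0] t0 by blast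
    have xPQ: "x \<in> P - Q" using QP xP by auto
    have gen: "(z \<notin> Q \<longrightarrow> reach_in E (P-Q) w z) \<and> (z \<in> Q \<longrightarrow> reach_in E (P-Q) w x)"
      if "reach_in E P w z" for z
      using that
    proof (induction rule: reach_induct)
      case base thus ?case using wQ by (auto intro: reach_refl)
    next
      case (step y1 z1)
      have y1P: "y1 \<in> P" using reach_mem[OF step(1)] .
      show ?case
      proof (cases "y1 \<in> Q")
        case True
        show ?thesis
        proof (cases "z1 \<in> Q")
          case True thus ?thesis using step(4) \<open>y1 \<in> Q\<close> by blast
        next
          case False
          hence "z1 = x" using Qclosed[OF \<open>y1 \<in> Q\<close>, of z1] step(2,3) by blast
          thus ?thesis using step(4) True by blast
        qed
      next
        case False
        show ?thesis
        proof (cases "z1 \<in> Q")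
          case True
          hence "y1 = x" using Qclosed[OF True, of y1] sym[OF step(2)] y1P False by blast
          thus ?thesis using step(4) False \<open>z1 \<in> Q\<close> by blast
        next
          case False2: False
          thus ?thesis using step(4) False reach_snoc[of E "P-Q" w y1 z1] step(2,3) by blast
        qed
      qed
    qed
    have g2: "\<forall>z\<in>P-Q. reach_in E (P-Q) w z"
    proof
      fix z assume "z \<in> P - Q" thus "reach_in E (P-Q) w z" using gen[OF Preach[of z]] by auto
    qed
    have g3: "\<exists>t\<in>P-Q. \<exists>c\<in>B-{b}. E t c" using t0 t0Q by blast
    have g1: "P - Q \<subseteq> V - B" "w \<in> P - Q" using PVB wP wQ by auto
    have "P - Q \<in> F" unfolding F_def using g1 g2 g3 by simp
    hence "card P \<le> card (P - Q)" by (rule Pmin)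
    moreover have "card (P - Q) < card P" using finP yQ yP QP by (intro psubset_card_mono) auto
    ultimately show False by simp
  qed
  have "nonsep E S"
    unfolding nonsep_def
  proof (intro conjI)
    show fS: "finite S" using finB finP S_def by simp
    show "2 \<le> card S" using cardB card_mono[OF fS] BS by (meson le_trans psubset_imp_subset)
    show "connected_in E S"
    proof (rule conn_hub[OF sym])
      fix y assume "y \<in> S"
      show "reach_in E S y b"
      proof (cases "y \<in> B")
        case True show ?thesis by (rule conn_reach[OF connB True bB]) (auto simp: S_def)
      next
        case False
        hence "y \<in> P" using \<open>y\<in>S\<close> S_def by auto
        hence "reach_in E S y w" by (rule reach_mono[OF Preach']) (auto simp: S_def)
        moreover have "reach_in E S w b" using reach_edge[of E w b S] sym[OF bw] wP bB S_def by auto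
        ultimately show ?thesis by (rule reach_trans')
      qed
    qed
    show "\<forall>x\<in>S. connected_in E (S - {x})"
    proof
      fix x assume "x \<in> S"
      show "connected_in E (S - {x})"
      proof (cases "x \<in> B")
        case False
        hence xP: "x \<in> P" using \<open>x\<in>S\<close> S_def by auto
        show ?thesis
        proof (rule conn_hub[OF sym])
          fix y assume yS: "y \<in> S - {x}"
          show "reach_in E (S - {x}) y b"
          proof (cases "y \<in> B")
            case True show ?thesis by (rule conn_reach[OF connB True bB]) (use False in \<open>auto simp: S_def\<close>)
          next
            case False thus ?thesis using key[OF xP] yS S_def by auto
          qed
        qed
      next
        case xB: True
        have PSx: "P \<subseteq> S - {x}" using xB PVB S_def by auto
        show ?thesis
        proof (cases "x = b")
          case True
          show ?thesis
          proof (rule conn_hub[OF sym, where h=c0])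
            fix y assume yS: "y \<in> S - {x}"
            show "reach_in E (S - {x}) y c0"
            proof (cases "y \<in> B")
              case True
              have "y \<in> B - {b}" using True yS \<open>x = b\<close> by auto
              show ?thesis by (rule conn_reach[OF connBx[OF bB] \<open>y \<in> B - {b}\<close> t0(2)]) (use \<open>x = b\<close> in \<open>auto simp: S_def\<close>)
            next
              case False
              hence yP: "y \<in> P" using yS S_def by auto
              have "reach_in E P y t0" using reach_trans'[OF Preach'[OF yP] Preach[OF t0(1)]] .
              hence "reach_in E (S - {x}) y t0" using PSx by (rule reach_mono)
              moreover have "reach_in E (S - {x}) t0 c0"
                using reach_edge[of E t0 c0 "S - {x}"] t0 PSx True S_def by auto
              ultimately show ?thesis by (rule reach_trans')
            qed
          qed
        next
          case False
          show ?thesis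
          proof (rule conn_hub[OF sym, where h=b])
            fix y assume yS: "y \<in> S - {x}"
            show "reach_in E (S - {x}) y b"
            proof (cases "y \<in> B")
              case True
              have "y \<in> B - {x}" "b \<in> B - {x}" using True yS bB False by auto
              show ?thesis by (rule conn_reach[OF connBx[OF xB] \<open>y \<in> B - {x}\<close> \<open>b \<in> B - {x}\<close>]) (auto simp: S_def)
            next
              case False2: False
              hence yP: "y \<in> P" using yS S_def by auto
              hence "reach_in E (S - {x}) y w" using reach_mono[OF Preach' PSx] by blast
              moreover have "reach_in E (S - {x}) w b"
                using reach_edge[of E w b "S - {x}"] sym[OF bw] wP PSx bB False S_def by auto
              ultimately show ?thesis by (rule reach_trans')
            qed
          qed
        qed
      qed
    qed
  qed
  thus False using maxB[OF BS SV] by simp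
qed


lemma lall_set: "list_all2 P xs ys \<Longrightarrow> (\<And>x y. x \<in> set xs \<Longrightarrow> P x y \<Longrightarrow> y \<in> A) \<Longrightarrow> set ys \<subseteq> A"
  by (induction rule: list_all2_induct) auto

locale gsetup =
  fixes V :: "'a set" and E :: "'a \<Rightarrow> 'a \<Rightarrow> bool" and B :: "'a set" and u :: 'a
  assumes sg: "simple_graph V E" and uB: "u \<in> B" and BV: "B \<subseteq> V"
    and nbr: "\<And>d w. d \<in> B - {u} \<Longrightarrow> E d w \<Longrightarrow> w \<in> B"
    and adj: "\<And>d. d \<in> B - {u} \<Longrightarrow> E u d"
begin

abbreviation "HH \<equiv> V - (B - {u})"
abbreviation "EH \<equiv> (\<lambda>x y. E x y \<and> x \<in> V - (B - {u}) \<and> y \<in> V - (B - {u}))"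
definition pi :: "'a \<Rightarrow> 'a" where "pi x = (if x \<in> B - {u} then u else x)"

lemma sym: "E x y \<Longrightarrow> E y x" using sg unfolding simple_graph_def by blast
lemma inV: "E x y \<Longrightarrow> x \<in> V \<and> y \<in> V" using sg unfolding simple_graph_def by blast

lemma trap: assumes "u \<in> set cs" "y \<in> B - {u}" shows "cops_win_from V E cs y"
proof -
  obtain i where i: "i < length cs" "cs ! i = u" using assms(1) by (auto simp: in_set_conv_nth)
  have "list_all2 (\<lambda>c c'. c' = c \<or> E c c') cs (cs[i := y])"
    using i adj[OF assms(2)] by (auto simp: list_all2_conv_all_nth nth_list_update)
  moreover have "y \<in> set (cs[i := y])" using i by (simp add: set_update_memI)
  ultimately show ?thesis by (blast intro: cops_win_from.step)
qed

lemma stuck: "reach_in E (V - C) d y \<Longrightarrow> d \<in> B - {u} \<Longrightarrow> u \<in> C \<Longrightarrow> y \<in> B - {u}"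
proof (induction rule: reach_induct)
  case base thus ?case by simp
next
  case (step y z)
  thus ?case using nbr[of y z] by blast
qed

lemma closed: "reach_in E (V - C) a b \<Longrightarrow> a \<notin> B - {u} \<Longrightarrow> u \<in> C \<Longrightarrow> reach_in E (V - C - (B - {u})) a b"
proof (induction rule: reach_induct)
  case base thus ?case by (auto intro: reach_refl)
next
  case (step y z)
  have IH: "reach_in E (V - C - (B - {u})) a y" using step(4,5,6) by simp
  have yS: "y \<in> V - C - (B - {u})" using reach_mem[OF IH] .
  have "z \<notin> B - {u}"
  proof
    assume "z \<in> B - {u}"
    hence "y \<in> B" using nbr sym[OF step(2)] by blast
    thus False using yS step(6) by auto
  qed
  thus ?case using reach_snoc[OF IH step(2)] step(3) by blast
qed

lemma sim: "cops_win_from HH EH cs r \<Longrightarrow>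
  set cs \<subseteq> HH \<longrightarrow> (\<forall>r0. r0 \<in> V \<longrightarrow> pi r0 = r \<longrightarrow> cops_win_from V E cs r0)"
proof (induction rule: cops_win_from.induct)
  case (step cs cs' r)
  show ?case
  proof (intro impI allI)
    fix r0 assume csH: "set cs \<subseteq> HH" and r0V: "r0 \<in> V" and pr: "pi r0 = r"
    have la: "list_all2 (\<lambda>c c'. c' = c \<or> E c c') cs cs'"
      using step(1) by (rule list_all2_mono) auto
    have cs'H: "set cs' \<subseteq> HH" using lall_set[OF step(1), of HH] csH by auto
    show "cops_win_from V E cs r0"
    proof (cases "r \<in> set cs'")
      case True
      show ?thesis
      proof (cases "r0 = r")
        case True thus ?thesis using la \<open>r \<in> set cs'\<close> by (blast intro: cops_win_from.step)
      next
        case False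
        hence r0D: "r0 \<in> B - {u}" and ru: "r = u" using pr unfolding pi_def by (auto split: if_splits)
        have "\<forall>r'. reach_in E (V - set cs') r0 r' \<longrightarrow> cops_win_from V E cs' r'"
        proof (intro allI impI)
          fix r' assume "reach_in E (V - set cs') r0 r'"
          have "u \<in> set cs'" using ru \<open>r \<in> set cs'\<close> by simp
          have "r' \<in> B - {u}" by (rule stuck[OF \<open>reach_in E (V - set cs') r0 r'\<close> r0D \<open>u \<in> set cs'\<close>])
          thus "cops_win_from V E cs' r'" by (rule trap[OF \<open>u \<in> set cs'\<close>])
        qed
        thus ?thesis using la by (blast intro: cops_win_from.step)
      qed
    next
      case False
      with step(2) have IH: "\<forall>r'. reach_in EH (HH - set cs') r r' \<longrightarrow>
          (set cs' \<subseteq> HH \<longrightarrow> (\<forall>r0. r0 \<in> V \<longrightarrow> pi r0 = r' \<longrightarrow> cops_win_from V E cs' r0))"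
        by blast
      have "\<forall>r'. reach_in E (V - set cs') r0 r' \<longrightarrow> cops_win_from V E cs' r'"
      proof (intro allI impI)
        fix r' assume rr: "reach_in E (V - set cs') r0 r'"
        have r'V: "r' \<in> V" using reach_mem[OF rr] by auto
        have "reach_in EH (HH - set cs') r (pi r')"
        proof (cases "u \<in> set cs'")
          case False
          show ?thesis unfolding pr[symmetric]
          proof (rule reach_proj[OF rr])
            fix x assume "x \<in> V - set cs'" thus "pi x \<in> HH - set cs'"
              using False uB BV unfolding pi_def by auto
          next
            fix x y assume xy: "x \<in> V - set cs'" "y \<in> V - set cs'" "E x y"
            show "pi x = pi y \<or> EH (pi x) (pi y)"
            proof (cases "x \<in> B - {u}")
              case True
              have "y \<in> B" using nbr[OF True xy(3)] .
              thus ?thesis using True unfolding pi_def by auto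
            next
              case xn: False
              show ?thesis
              proof (cases "y \<in> B - {u}")
                case True
                have "x \<in> B" using nbr[OF True sym[OF xy(3)]] .
                thus ?thesis using True xn unfolding pi_def by auto
              next
                case False
                thus ?thesis using xn xy unfolding pi_def by auto
              qed
            qed
          qed
        next
          case True
          have r0D: "r0 \<notin> B - {u}"
          proof
            assume "r0 \<in> B - {u}"
            hence "r = u" using pr unfolding pi_def by simp
            thus False using \<open>r \<notin> set cs'\<close> True by simp
          qed
          have rr2: "reach_in E (V - set cs' - (B-{u})) r0 r'" using closed[OF rr r0D True] .
          have p0: "pi r0 = r0" using r0D unfolding pi_def by simp
          have p1: "pi r' = r'" using reach_mem[OF rr2] unfolding pi_def by auto
          have "reach_in EH (HH - set cs') ((\<lambda>x. x) r0) ((\<lambda>x. x) r')"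
            by (rule reach_proj[OF rr2]) auto
          thus ?thesis using p0 p1 pr by simp
        qed
        hence "set cs' \<subseteq> HH \<longrightarrow> (\<forall>r0. r0 \<in> V \<longrightarrow> pi r0 = pi r' \<longrightarrow> cops_win_from V E cs' r0)"
          using IH by blast
        thus "cops_win_from V E cs' r'" using cs'H r'V by blast
      qed
      thus ?thesis using la by (blast intro: cops_win_from.step)
    qed
  qed
qed

lemma win_transfer: assumes "cops_win HH EH k" shows "cops_win V E k"
proof -
  obtain cs where cs: "length cs = k" "set cs \<subseteq> HH" "\<forall>r\<in>HH - set cs. cops_win_from HH EH cs r"
    using assms unfolding cops_win_def by blast
  have "\<forall>r\<in>V - set cs. cops_win_from V E cs r"
  proof
    fix r assume r: "r \<in> V - set cs"
    have piH: "pi r \<in> HH" using r uB BV unfolding pi_def by auto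
    show "cops_win_from V E cs r"
    proof (cases "pi r \<in> set cs")
      case True
      then have "r \<in> B - {u}" "u \<in> set cs" using r unfolding pi_def by (auto split: if_splits)
      thus ?thesis using trap by simp
    next
      case False
      hence "cops_win_from HH EH cs (pi r)" using cs(3) piH by blast
      hence "set cs \<subseteq> HH \<longrightarrow> (\<forall>r0. r0 \<in> V \<longrightarrow> pi r0 = pi r \<longrightarrow> cops_win_from V E cs r0)"
        by (rule sim)
      thus ?thesis using cs(2) r by blast
    qed
  qed
  moreover have "set cs \<subseteq> V" using cs(2) by auto
  ultimately show "cops_win V E k" using cs(1) unfolding cops_win_def by blast
qed

end

theorem mainTheorem11:
  fixes V :: "'a set" and E :: "'a \<Rightarrow> 'a \<Rightarrow> bool" and B :: "'a set" and u :: 'a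
  assumes "simple_graph V E"
    and "connected_in E V"
    and "card (block_tree_vertices V E) > 1"
    and "end_block V E B"
    and "u \<in> B" and "cut_vertex V E u"
    and "\<forall>v\<in>B - {u}. E u v"
  shows "c_inf (V - (B - {u})) (\<lambda>x y. E x y \<and> x \<in> V - (B - {u}) \<and> y \<in> V - (B - {u}))
           \<ge> c_inf V E"
proof -
  have blk: "is_block V E B" and c1: "card {v\<in>B. cut_vertex V E v} = 1"
    using assms(4) unfolding end_block_def by auto
  obtain a where "{v\<in>B. cut_vertex V E v} = {a}" using c1 by (auto simp: card_1_singleton_iff)
  moreover have "u \<in> {v\<in>B. cut_vertex V E v}" using assms(5,6) by simp
  ultimately have cut: "{v\<in>B. cut_vertex V E v} = {u}" by auto
  have BV: "B \<subseteq> V" using blk unfolding is_block_def by auto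
  interpret g: gsetup V E B u
  proof
    show "simple_graph V E" by (rule assms(1))
    show "u \<in> B" by (rule assms(5))
    show "B \<subseteq> V" by (rule BV)
    fix d w assume "d \<in> B - {u}" "E d w"
    thus "w \<in> B" using block_closed[OF assms(1) blk cut assms(5), of d w] by simp
  next
    show "\<And>d. d \<in> B - {u} \<Longrightarrow> E u d" using assms(7) by blast
  qed
  have "finite (V - (B - {u}))" using assms(1) unfolding simple_graph_def by auto
  then obtain xs where xs: "set xs = V - (B - {u})" using finite_list by blast
  have "cops_win (V - (B - {u})) (\<lambda>x y. E x y \<and> x \<in> V - (B - {u}) \<and> y \<in> V - (B - {u})) (length xs)"
    unfolding cops_win_def
  proof (intro exI conjI)
    show "length xs = length xs" ..
    show "set xs \<subseteq> V - (B - {u})" using xs by simp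
    show "\<forall>r\<in>V - (B - {u}) - set xs. cops_win_from (V - (B - {u})) (\<lambda>x y. E x y \<and> x \<in> V - (B - {u}) \<and> y \<in> V - (B - {u})) xs r"
      using xs by simp
  qed
  hence "cops_win (V - (B - {u})) (\<lambda>x y. E x y \<and> x \<in> V - (B - {u}) \<and> y \<in> V - (B - {u}))
     (c_inf (V - (B - {u})) (\<lambda>x y. E x y \<and> x \<in> V - (B - {u}) \<and> y \<in> V - (B - {u})))"
    unfolding c_inf_def by (rule LeastI)
  hence "cops_win V E (c_inf (V - (B - {u})) (\<lambda>x y. E x y \<and> x \<in> V - (B - {u}) \<and> y \<in> V - (B - {u})))"
    by (rule g.win_transfer)
  thus ?thesis unfolding c_inf_def[of V E] by (rule Least_le)
qed

end
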